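(* Let $\ell\ge2$. In $CK(2,\ell)$ there is a directed path from a vertex $u$ to a vertex $v$ if and only if the imprint of $v$ contains the same number of $+$ signs and the same number of $-$ signs as the imprint of $u$.
   Context: $CK(2,\ell)$ has as vertices all sequences $a_1\ldots a_\ell\in\{0,1,2\}^\ell$ with $a_i\neq a_{i+1}$ for $1\le i\le\ell-1$ and $a_1\ne a_\ell$, and an arc from $a_1\ldots a_\ell$ to $b_1\ldots b_\ell$ iff both are vertices and $b_i=a_{i+1}$ for $1\le i\le \ell-1$. For distinct $a,b\in\{0,1,2\}$ define $sgn(0,1)=sgn(1,2)=sgn(2,0)=+$ and $sgn(1,0)=sgn(2,1)=sgn(0,2)=-$. The imprint of $v=v_1\ldots v_\ell$ is $im(v)=(sgn(v_1,v_2),\dots,sgn(v_{\ell-1},v_\ell),sgn(v_\ell,v_1))$. *)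

theory Defs
  imports Main
begin

text \<open>Vertices of CK(2,l): sequences a_1 ... a_l over {0,1,2}, represented as lists of
  naturals of length l (index i of the list is a_(i+1)).\<close>
definition CK_vertex :: "nat \<Rightarrow> nat list \<Rightarrow> bool" where
  "CK_vertex l a \<longleftrightarrow> length a = l \<and> set a \<subseteq> {0,1,2}
     \<and> (\<forall>i. i + 1 < l \<longrightarrow> a ! i \<noteq> a ! (i + 1))
     \<and> a ! 0 \<noteq> a ! (l - 1)"

definition CK_arc :: "nat \<Rightarrow> nat list \<Rightarrow> nat list \<Rightarrow> bool" where
  "CK_arc l a b \<longleftrightarrow> CK_vertex l a \<and> CK_vertex l b
     \<and> (\<forall>i. i + 1 < l \<longrightarrow> b ! i = a ! (i + 1))"

datatype sign = Plus | Minus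

definition sgn3 :: "nat \<Rightarrow> nat \<Rightarrow> sign" where
  "sgn3 a b = (if (a, b) \<in> {(0,1),(1,2),(2,0)} then Plus else Minus)"

definition imprint :: "nat list \<Rightarrow> sign list" where
  "imprint v = map (\<lambda>i. sgn3 (v ! i) (v ! ((i + 1) mod length v))) [0..<length v]"

definition count_sign :: "sign \<Rightarrow> sign list \<Rightarrow> nat" where
  "count_sign s xs = length (filter (\<lambda>x. x = s) xs)"

end

theory Submission imports Defs "HOL-Library.Multiset" begin


lemma vert_iff:
  assumes "l \<ge> 2"
  shows "CK_vertex l a \<longleftrightarrow> length a = l \<and> set a \<subseteq> {0,1,2} \<and> (\<forall>i<l. a!i \<noteq> a!(Suc i mod l))"
proof
  assume H: "CK_vertex l a"
  show "length a = l \<and> set a \<subseteq> {0,1,2} \<and> (\<forall>i<l. a!i \<noteq> a!(Suc i mod l))"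
  proof (intro conjI allI impI)
    fix i assume "i < l"
    show "a!i \<noteq> a!(Suc i mod l)"
    proof (cases "Suc i = l")
      case True
      then have "i = l - 1" by simp
      then have "Suc i mod l = 0" using True by simp
      then show ?thesis using H \<open>i = l - 1\<close> unfolding CK_vertex_def by auto
    next
      case False
      then show ?thesis using H \<open>i<l\<close> unfolding CK_vertex_def by auto
    qed
  qed (use H in \<open>auto simp: CK_vertex_def\<close>)
next
  assume H: "length a = l \<and> set a \<subseteq> {0,1,2} \<and> (\<forall>i<l. a!i \<noteq> a!(Suc i mod l))"
  have "a ! (l-1) \<noteq> a ! (Suc (l-1) mod l)" 
  proof -
    have "l - 1 < l" using assms by simp
    then show ?thesis using H by blast
  qed
  moreover have "Suc (l-1) mod l = 0" using assms by simp
  ultimately have "a!0 \<noteq> a!(l-1)" by metis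
  moreover have "\<forall>i. i + 1 < l \<longrightarrow> a ! i \<noteq> a ! (i + 1)"
  proof (intro allI impI)
    fix i assume "i+1 < l"
    then have "Suc i mod l = i + 1" by simp
    then show "a ! i \<noteq> a ! (i + 1)" using H \<open>i+1<l\<close> by (metis Suc_lessD add.commute plus_1_eq_Suc)
  qed
  ultimately show "CK_vertex l a" using H unfolding CK_vertex_def by auto
qed

lemma sgn_third1:
  assumes "x \<in> {0,1,2}" "y \<in> {0,1,2}" "x \<noteq> (y::nat)"
  shows "sgn3 (3 - x - y) x = sgn3 x y" "sgn3 x (3 - x - y) = sgn3 y x"
    "3 - x - y \<in> {0,1,2}" "3 - x - y \<noteq> x" "3 - x - y \<noteq> y"
  using assms by (auto simp: sgn3_def)

lemma sgn_inj:
  assumes "x \<in> {0,1,2}" "y \<in> {0,1,2}" "z \<in> {0,1,2}" "x \<noteq> (y::nat)" "x \<noteq> z" "sgn3 x y = sgn3 x z"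
  shows "y = z"
  using assms by (auto simp: sgn3_def)

lemma sgn_diff:
  assumes "x \<in> {0,1,2}" "y \<in> {0,1,2}" "z \<in> {0,1,2}" "x \<noteq> (y::nat)" "y \<noteq> z" "sgn3 x y \<noteq> sgn3 y z"
  shows "x = z"
  using assms by (auto simp: sgn3_def)

lemma three_vals:
  assumes "x \<in> {0,1,2}" "y \<in> {0,1,2}" "z \<in> {0,1,2}" "w \<in> {0,1,2}" "x \<noteq> (y::nat)" "x \<noteq> z" "w \<noteq> y" "w \<noteq> z" "w \<noteq> x"
  shows "y = z" "w = 3 - y - x"
  using assms by auto

lemma length_imprint[simp]: "length (imprint a) = length a"
  by (simp add: imprint_def)

lemma nth_imprint: "i < length a \<Longrightarrow> imprint a ! i = sgn3 (a!i) (a!(Suc i mod length a))"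
  by (simp add: imprint_def)



lemma mod_shift: "(k + Suc i mod l) mod l = Suc ((k+i) mod l) mod (l::nat)"
  by (metis add_Suc_right mod_Suc_eq mod_add_right_eq)

lemma vert_rot:
  assumes "l \<ge> 2" "CK_vertex l a"
  shows "CK_vertex l (rotate k a)"
proof -
  have H: "length a = l" "set a \<subseteq> {0,1,2}" "\<forall>i<l. a!i \<noteq> a!(Suc i mod l)"
    using assms vert_iff by auto
  have "\<forall>i<l. rotate k a!i \<noteq> rotate k a!(Suc i mod l)"
  proof (intro allI impI)
    fix i assume i: "i < l"
    have "rotate k a ! i = a!((k+i) mod l)" using i H by (simp add: nth_rotate)
    moreover have "rotate k a ! (Suc i mod l) = a!(Suc ((k+i) mod l) mod l)"
      using i H assms by (simp add: nth_rotate mod_shift)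
    moreover have "(k+i) mod l < l" using assms by simp
    ultimately show "rotate k a!i \<noteq> rotate k a!(Suc i mod l)" using H by metis
  qed
  then show ?thesis using H assms by (simp add: vert_iff)
qed

lemma imprint_rot:
  assumes "length a > 0"
  shows "imprint (rotate k a) = rotate k (imprint a)"
proof (rule nth_equalityI)
  show "length (imprint (rotate k a)) = length (rotate k (imprint a))" by simp
  fix i assume "i < length (imprint (rotate k a))"
  then have i: "i < length a" by simp
  have "(k+i) mod length a < length a" using assms by simp
  then show "imprint (rotate k a) ! i = rotate k (imprint a) ! i"
    using i assms by (simp add: nth_rotate nth_imprint mod_shift)
qed

lemma mset_rot: "mset (rotate k xs) = mset xs"
proof (induction k)
  case 0 then show ?case by simp
next
  case (Suc k)
  have "mset (rotate1 ys) = mset ys" for ys :: "'a list" by (cases ys) auto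
  then show ?case using Suc by (simp add: rotate_Suc)
qed

lemma mod_facts:
  assumes "l \<ge> (2::nat)" "j < l" "k = (j + l - 1) mod l"
  shows "k < l" "k \<noteq> j" "Suc k mod l = j" "\<And>i. i < l \<Longrightarrow> Suc i mod l = j \<Longrightarrow> i = k"
    "Suc j mod l \<noteq> j"
proof -
  show "k < l" using assms by simp
  show kj: "Suc k mod l = j"
  proof (cases j)
    case 0 then show ?thesis using assms by simp
  next
    case (Suc m)
    then have "k = m" using assms by simp
    then show ?thesis using Suc assms by simp
  qed
  show "Suc j mod l \<noteq> j"
  proof (cases "Suc j = l")
    case True then show ?thesis using assms by auto
  next
    case False then show ?thesis using assms by simp
  qed
  show "k \<noteq> j"
  proof
    assume "k = j"
    then show False using kj \<open>Suc j mod l \<noteq> j\<close> by simp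
  qed
  fix i assume i: "i < l" "Suc i mod l = j"
  show "i = k"
  proof (cases "Suc i = l")
    case True
    then have "j = 0" using i by simp
    then show ?thesis using assms True by simp
  next
    case False
    then have "Suc i = j" using i by simp
    then have "j + l - 1 = i + l" by simp
    then show ?thesis using assms i by simp
  qed
qed



lemma flip:
  assumes l: "l \<ge> 2" and V: "CK_vertex l a" and j: "j < l" and kd: "k = (j + l - 1) mod l"
    and eq: "a!k = a!(Suc j mod l)" and cd: "c = 3 - a!k - a!j"
  shows "CK_vertex l (a[j:=c])"
    "imprint (a[j:=c]) = (imprint a)[k := imprint a ! j, j := imprint a ! k]"
proof -
  have H: "length a = l" "set a \<subseteq> {0,1,2}" "\<forall>i<l. a!i \<noteq> a!(Suc i mod l)"
    using l V vert_iff by auto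
  note M = mod_facts[OF l j kd]
  have ak: "a!k \<in> {0,1,2}" using H M(1) nth_mem by blast
  have aj: "a!j \<in> {0,1,2}" using H j nth_mem by blast
  have "a!k \<noteq> a!(Suc k mod l)" using H(3) M(1) by blast
  then have akj: "a!k \<noteq> a!j" using M(3) by simp
  note T = sgn_third1[OF ak aj akj, folded cd]
  have cne: "c \<noteq> a!(Suc j mod l)" using T eq by simp
  show "CK_vertex l (a[j:=c])"
    unfolding vert_iff[OF l]
  proof (intro conjI allI impI)
    show "length (a[j := c]) = l" using H by simp
    show "set (a[j := c]) \<subseteq> {0, 1, 2}" using set_update_subset_insert[of a j c] H(2) T(3) by blast
    fix i assume i: "i < l"
    show "a[j := c] ! i \<noteq> a[j := c] ! (Suc i mod l)"
    proof (cases "i = j")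
      case True then show ?thesis using H j M(5) cne by simp
    next
      case False
      show ?thesis
      proof (cases "Suc i mod l = j")
        case True
        then have "i = k" using M(4) i by blast
        then show ?thesis using H j True T False by simp
      next
        case False2: False
        then show ?thesis using H i False by simp
      qed
    qed
  qed
  show "imprint (a[j:=c]) = (imprint a)[k := imprint a ! j, j := imprint a ! k]"
  proof (rule nth_equalityI)
    show "length (imprint (a[j := c])) = length ((imprint a)[k := imprint a ! j, j := imprint a ! k])" by simp
    fix i assume "i < length (imprint (a[j := c]))"
    then have i: "i < l" using H by simp
    have ij: "imprint a ! j = sgn3 (a!j) (a!k)" using nth_imprint[of j a] H(1) j eq by simp
    have ik: "imprint a ! k = sgn3 (a!k) (a!j)" using nth_imprint[of k a] H(1) M(1,3) by simp
    show "imprint (a[j := c]) ! i = (imprint a)[k := imprint a ! j, j := imprint a ! k] ! i"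
    proof (cases "i = j")
      case True
      then show ?thesis using nth_imprint[of j "a[j:=c]"] H(1) j M(5) eq ij ik T M(2) by simp
    next
      case False
      show ?thesis
      proof (cases "i = k")
        case True
        then show ?thesis using nth_imprint[of k "a[j:=c]"] H(1) j M(1,2,3) ij ik T False by simp
      next
        case False2: False
        then have "Suc i mod l \<noteq> j" using M(4) i by blast
        then show ?thesis using nth_imprint[of i "a[j:=c]"] nth_imprint[of i a] H(1) i False False2 by simp
      qed
    qed
  qed
qed



lemma in012: "set a \<subseteq> {0,1,2} \<Longrightarrow> i < length a \<Longrightarrow> a!i \<in> {0,1,2::nat}"
  using nth_mem by blast

lemma rot1_upd:
  assumes "length a = l" "i + 1 < l"
  shows "rotate 1 (a[0:=y]) ! i = a!(i+1)"
  using assms by (simp add: nth_rotate1)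

lemma arc_rot:
  assumes l: "l \<ge> 2" and V: "CK_vertex l a"
  shows "CK_arc l a (rotate 1 a)"
proof -
  have len: "length a = l" using V by (simp add: CK_vertex_def)
  have "\<forall>i. i + 1 < l \<longrightarrow> rotate 1 a ! i = a ! (i + 1)"
    using rot1_upd[OF len, of _ "a!0"] by simp
  then show ?thesis using vert_rot[OF l V, of 1] V unfolding CK_arc_def by blast
qed

lemma R_rot:
  assumes l: "l \<ge> 2" and V: "CK_vertex l a"
  shows "(CK_arc l)\<^sup>*\<^sup>* a (rotate k a)"
proof (induction k)
  case 0 then show ?case by simp
next
  case (Suc k)
  have "CK_arc l (rotate k a) (rotate 1 (rotate k a))" using arc_rot[OF l vert_rot[OF l V]] .
  then show ?case using Suc by (simp add: rotate_rotate)
qed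

lemma rot_back:
  assumes "length a = l" "l \<ge> 2"
  shows "rotate (l - 1) (rotate 1 a) = a"
proof -
  have "rotate (l-1) (rotate 1 a) = rotate (l-1+1) a" by (rule rotate_rotate)
  moreover have "l - 1 + 1 = l" using assms by simp
  ultimately show ?thesis using assms by simp
qed

lemma arc_decomp:
  assumes l: "l \<ge> 2" and A: "CK_arc l a b"
  shows "b = rotate 1 (a[0 := b!(l-1)])"
proof (rule nth_equalityI)
  have la: "length a = l" and lb: "length b = l" using A by (auto simp: CK_arc_def CK_vertex_def)
  show "length b = length (rotate 1 (a[0 := b ! (l - 1)]))" using la lb by simp
  fix i assume "i < length b"
  then have i: "i < l" using lb by simp
  show "b ! i = rotate 1 (a[0 := b ! (l - 1)]) ! i"
  proof (cases "i + 1 < l")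
    case True
    then show ?thesis using rot1_upd[OF la True] A unfolding CK_arc_def by simp
  next
    case False
    then have "Suc i = l" using i by simp
    then have "i = l - 1" "(1 + i) mod l = 0" by auto
    moreover have "Suc (l-1) mod l = 0" using l by simp
    ultimately show ?thesis using la l i by (simp add: nth_rotate1)
  qed
qed

lemma arc_cases:
  assumes l: "l \<ge> 2" and A: "CK_arc l a b"
  shows "b!(l-1) = a!0 \<or> (b!(l-1) \<noteq> a!0 \<and> a!((0 + l - 1) mod l) = a!(Suc 0 mod l)
            \<and> b!(l-1) = 3 - a!((0 + l - 1) mod l) - a!0)"
proof -
  have Va: "CK_vertex l a" and Vb: "CK_vertex l b" using A by (auto simp: CK_arc_def)
  have Ha: "length a = l" "set a \<subseteq> {0,1,2}" "\<forall>i<l. a!i \<noteq> a!(Suc i mod l)"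
    using l Va vert_iff by auto
  have Hb: "length b = l" "set b \<subseteq> {0,1,2}" "\<forall>i<l. b!i \<noteq> b!(Suc i mod l)"
    using l Vb vert_iff by auto
  have sh: "\<forall>i. i + 1 < l \<longrightarrow> b ! i = a ! (i + 1)" using A by (simp add: CK_arc_def)
  have e1: "(0 + l - 1) mod l = l - 1" "Suc 0 mod l = 1" using l by auto
  have x1: "b!(l-1) \<noteq> b!(l-2)"
  proof -
    have "l - 2 < l" using l by simp
    then have "b!(l-2) \<noteq> b!(Suc (l-2) mod l)" using Hb(3) by blast
    moreover have "Suc (l-2) mod l = l - 1" using l by simp
    ultimately show ?thesis by simp
  qed
  have "l - 2 + 1 < l" using l by simp
  then have "b!(l-2) = a!(l-2+1)" using sh by blast
  moreover have "l - 2 + 1 = l - 1" using l by simp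
  ultimately have "b!(l-2) = a!(l-1)" by simp
  with x1 have x2: "b!(l-1) \<noteq> a!(l-1)" by simp
  have "b!(l-1) \<noteq> b!(Suc (l-1) mod l)" using Hb(3)[rule_format, of "l-1"] l by simp
  moreover have "Suc (l-1) mod l = 0" using l by simp
  moreover have "b!0 = a!1" using sh l by simp
  ultimately have x3: "b!(l-1) \<noteq> a!1" by simp
  have a1: "a!0 \<noteq> a!1" using Ha(3)[rule_format, of 0] l by simp
  have a2: "a!(l-1) \<noteq> a!0"
  proof -
    have "l - 1 < l" using l by simp
    then have "a!(l-1) \<noteq> a!(Suc (l-1) mod l)" using Ha(3) by blast
    then show ?thesis using l by simp
  qed
  have m: "b!(l-1) \<in> {0,1,2}" "a!0 \<in> {0,1,2}" "a!1 \<in> {0,1,2}" "a!(l-1) \<in> {0,1,2}"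
    using Ha Hb l in012 by auto
  show ?thesis
  proof (cases "b!(l-1) = a!0")
    case True then show ?thesis by simp
  next
    case False
    note T = three_vals[OF m(2) m(4) m(3) m(1) a2[symmetric] a1 x2 x3 False]
    then show ?thesis using False e1 by simp
  qed
qed



lemma mset_rot1[simp]: "mset (rotate1 xs) = mset xs" by (cases xs) auto

lemma vlen: "CK_vertex l a \<Longrightarrow> length a = l" by (simp add: CK_vertex_def)

lemma arc_mset:
  assumes l: "l \<ge> 2" and A: "CK_arc l a b"
  shows "mset (imprint b) = mset (imprint a)"
proof -
  have Va: "CK_vertex l a" using A by (simp add: CK_arc_def)
  have la: "length a = l" using vlen[OF Va] .
  define x where "x = b!(l-1)"
  have bd: "b = rotate 1 (a[0:=x])" using arc_decomp[OF l A] x_def by simp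
  have "mset (imprint b) = mset (imprint (a[0:=x]))"
    using bd imprint_rot[of "a[0:=x]" 1] la l mset_rot by simp
  also have "\<dots> = mset (imprint a)"
  proof (cases "x = a!0")
    case True then show ?thesis by simp
  next
    case False
    then have c: "a!((0 + l - 1) mod l) = a!(Suc 0 mod l)" "x = 3 - a!((0 + l - 1) mod l) - a!0"
      using arc_cases[OF l A] x_def by auto
    have "0 < l" using l by simp
    note F = flip[OF l Va this refl c(1) c(2)]
    have "(0 + l - 1) mod l < length (imprint a)" using la l by simp
    then show ?thesis using F(2) mset_swap[of 0 "imprint a" "(0 + l - 1) mod l"] la l by simp
  qed
  finally show ?thesis .
qed

lemma R_mset:
  assumes l: "l \<ge> 2" and R: "(CK_arc l)\<^sup>*\<^sup>* a b"
  shows "mset (imprint b) = mset (imprint a)"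
  using R by (induction rule: rtranclp_induct) (use arc_mset[OF l] in auto)

lemma arc_rev:
  assumes l: "l \<ge> 2" and A: "CK_arc l a b"
  shows "(CK_arc l)\<^sup>*\<^sup>* b a"
proof -
  have Va: "CK_vertex l a" and Vb: "CK_vertex l b" using A by (auto simp: CK_arc_def)
  have la: "length a = l" using vlen[OF Va] .
  define x where "x = b!(l-1)"
  define a' where "a' = a[0:=x]"
  have bd: "b = rotate 1 a'" using arc_decomp[OF l A] x_def a'_def by simp
  have la': "length a' = l" using la a'_def by simp
  have "(CK_arc l)\<^sup>*\<^sup>* b (rotate (l-1) b)" using R_rot[OF l Vb] .
  then have Rb: "(CK_arc l)\<^sup>*\<^sup>* b a'" using rot_back[OF la' l] bd by simp
  show ?thesis
  proof (cases "x = a!0")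
    case True then show ?thesis using Rb a'_def by simp
  next
    case False
    then have c: "a!((0 + l - 1) mod l) = a!(Suc 0 mod l)" "x = 3 - a!((0 + l - 1) mod l) - a!0"
      using arc_cases[OF l A] x_def by auto
    have "0 < l" using l by simp
    note F = flip[OF l Va this refl c(1) c(2)]
    have Va': "CK_vertex l a'" using F(1) a'_def by simp
    have "\<forall>i. i + 1 < l \<longrightarrow> rotate 1 a ! i = a' ! (i + 1)"
      using rot1_upd[OF la, of _ "a!0"] a'_def by simp
    then have "CK_arc l a' (rotate 1 a)" using Va' vert_rot[OF l Va, of 1] unfolding CK_arc_def by blast
    moreover have "(CK_arc l)\<^sup>*\<^sup>* (rotate 1 a) a"
      using R_rot[OF l vert_rot[OF l Va, of 1], of "l-1"] rot_back[OF la l] by simp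
    ultimately show ?thesis using Rb by (meson rtranclp.rtrancl_into_rtrancl rtranclp_trans)
  qed
qed

lemma R_sym:
  assumes l: "l \<ge> 2" and R: "(CK_arc l)\<^sup>*\<^sup>* a b"
  shows "(CK_arc l)\<^sup>*\<^sup>* b a"
  using R
proof (induction rule: rtranclp_induct)
  case base then show ?case by simp
next
  case (step y z)
  then show ?case using arc_rev[OF l step(2)] by (meson rtranclp_trans)
qed

lemma mod_ne:
  assumes "j < (l::nat)" "0 < i" "i < l"
  shows "(j + i) mod l \<noteq> j"
proof (cases "j + i < l")
  case True then show ?thesis using assms by simp
next
  case False
  then have "(j + i) mod l = j + i - l" using assms by (simp add: mod_if)
  then show ?thesis using assms False by linarith
qed

lemma R_flip:
  assumes l: "l \<ge> 2" and V: "CK_vertex l a" and j: "j < l" and kd: "k = (j + l - 1) mod l"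
    and eq: "a!k = a!(Suc j mod l)" and cd: "c = 3 - a!k - a!j"
  shows "(CK_arc l)\<^sup>*\<^sup>* a (a[j:=c])"
proof -
  have la: "length a = l" using vlen[OF V] .
  note F = flip[OF l V j kd eq cd]
  define a2 where "a2 = rotate j a"
  have V2: "CK_vertex l a2" using vert_rot[OF l V] a2_def by simp
  have "0 < l" using l by simp
  have e0: "a2!0 = a!j" using a2_def la j by (simp add: nth_rotate)
  have e1: "a2!((0 + l - 1) mod l) = a!k"
  proof -
    have "(0 + l - 1) mod l = l - 1" using l by simp
    moreover have "(j + (l - 1)) mod l = k" using kd l by simp
    ultimately show ?thesis using a2_def la l by (simp add: nth_rotate)
  qed
  have e2: "a2!(Suc 0 mod l) = a!(Suc j mod l)"
  proof -
    have "Suc 0 mod l = 1" using l by simp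
    then show ?thesis using a2_def la l by (simp add: nth_rotate)
  qed
  have eq2: "a2!((0 + l - 1) mod l) = a2!(Suc 0 mod l)" using e1 e2 eq by simp
  have cd2: "c = 3 - a2!((0 + l - 1) mod l) - a2!0" using e0 e1 cd by simp
  note F2 = flip[OF l V2 \<open>0<l\<close> refl eq2 cd2]
  have rr: "a2[0:=c] = rotate j (a[j:=c])"
  proof (rule nth_equalityI)
    show "length (a2[0 := c]) = length (rotate j (a[j := c]))" using a2_def by simp
    fix i assume "i < length (a2[0 := c])"
    then have i: "i < l" using a2_def la by simp
    show "a2[0 := c] ! i = rotate j (a[j := c]) ! i"
    proof (cases "i = 0")
      case True then show ?thesis using a2_def la i j by (simp add: nth_rotate)
    next
      case False
      then have "(j + i) mod l \<noteq> j" using mod_ne j i by simp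
      then show ?thesis using a2_def la i j False by (simp add: nth_rotate)
    qed
  qed
  define a' where "a' = a[j:=c]"
  have Va': "CK_vertex l a'" using F(1) a'_def by simp
  have la2: "length a2 = l" using V2 vlen by blast
  have "\<forall>i. i + 1 < l \<longrightarrow> rotate 1 (a2[0:=c]) ! i = a2 ! (i + 1)"
    using rot1_upd[OF la2] by blast
  then have "CK_arc l a2 (rotate 1 (a2[0:=c]))"
    using V2 vert_rot[OF l F2(1), of 1] unfolding CK_arc_def by blast
  moreover have "rotate 1 (a2[0:=c]) = rotate (1 + j) a'" using rr a'_def by (simp add: rotate_rotate)
  moreover have "(CK_arc l)\<^sup>*\<^sup>* (rotate (1 + j) a') a'" using R_sym[OF l R_rot[OF l Va']] .
  moreover have "(CK_arc l)\<^sup>*\<^sup>* a a2" using R_rot[OF l V] a2_def by simp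
  ultimately have "(CK_arc l)\<^sup>*\<^sup>* a (rotate (1 + j) a')" "(CK_arc l)\<^sup>*\<^sup>* (rotate (1 + j) a') a'"
    by (auto intro: rtranclp.rtrancl_into_rtrancl)
  then show ?thesis using a'_def rtranclp_trans by metis
qed



fun inv :: "sign list \<Rightarrow> nat" where
  "inv [] = 0"
| "inv (Plus # xs) = inv xs"
| "inv (Minus # xs) = count_list xs Plus + inv xs"

lemma inv_swap: "inv (xs @ Minus # Plus # ys) = Suc (inv (xs @ Plus # Minus # ys))"
proof (induction xs)
  case Nil then show ?case by simp
next
  case (Cons x xs) then show ?case by (cases x) simp_all
qed

lemma sorted_form:
  "\<not>(\<exists>xs ys. d = xs @ Minus # Plus # ys) \<Longrightarrow>
     d = replicate (count_list d Plus) Plus @ replicate (count_list d Minus) Minus"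
proof (induction d)
  case Nil then show ?case by simp
next
  case (Cons x r)
  have nr: "\<not>(\<exists>xs ys. r = xs @ Minus # Plus # ys)"
  proof
    assume "\<exists>xs ys. r = xs @ Minus # Plus # ys"
    then obtain xs ys where "r = xs @ Minus # Plus # ys" by blast
    then have "x # r = (x # xs) @ Minus # Plus # ys" by simp
    then show False using Cons.prems by blast
  qed
  note IH = Cons.IH[OF nr]
  show ?case
  proof (cases x)
    case Plus then show ?thesis using IH by simp
  next
    case Minus
    have "count_list r Plus = 0"
    proof (rule ccontr)
      assume "count_list r Plus \<noteq> 0"
      then obtain p where p: "count_list r Plus = Suc p" by (cases "count_list r Plus") auto
      then have "r = Plus # (replicate p Plus @ replicate (count_list r Minus) Minus)"
        using IH by simp
      then have "x # r = [] @ Minus # Plus # (replicate p Plus @ replicate (count_list r Minus) Minus)"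
        using Minus by simp
      then show False using Cons.prems by blast
    qed
    then show ?thesis using IH Minus by simp
  qed
qed

lemma count_sign_eq: "count_sign s xs = count_list xs s"
  by (induction xs) (auto simp: count_sign_def)

lemma sort_reach:
  assumes l: "l \<ge> 2"
  shows "CK_vertex l a \<Longrightarrow> \<exists>c. (CK_arc l)\<^sup>*\<^sup>* a c \<and> CK_vertex l c \<and> c!0 = a!0 \<and>
      imprint c = replicate (count_list (imprint a) Plus) Plus @ replicate (count_list (imprint a) Minus) Minus"
proof (induction "inv (imprint a)" arbitrary: a rule: less_induct)
  case less
  note V = less.prems
  have la: "length a = l" using vlen[OF V] .
  show ?case
  proof (cases "\<exists>xs ys. imprint a = xs @ Minus # Plus # ys")
    case False
    then show ?thesis using sorted_form[OF False] V by blast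
  next
    case True
    then obtain xs ys where d: "imprint a = xs @ Minus # Plus # ys" by blast
    define k where "k = length xs"
    define j where "j = Suc k"
    have ll: "l = length xs + 2 + length ys" using d la by (metis length_imprint length_append length_Cons add_2_eq_Suc' add.commute add.left_commute)
    have j: "j < l" using ll j_def k_def by simp
    have kd: "k = (j + l - 1) mod l" using j j_def by simp
    have Sk: "Suc k mod l = j" using j j_def by simp
    have dk: "imprint a ! k = Minus" using d k_def by simp
    have dj: "imprint a ! j = Plus" using d k_def j_def by (simp add: nth_append)
    have H: "length a = l" "set a \<subseteq> {0,1,2}" "\<forall>i<l. a!i \<noteq> a!(Suc i mod l)"
      using l V vert_iff by auto
    have kl: "k < l" using j j_def by simp
    have s1: "imprint a ! k = sgn3 (a!k) (a!j)" using nth_imprint[of k a] la kl Sk by simp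
    have s2: "imprint a ! j = sgn3 (a!j) (a!(Suc j mod l))" using nth_imprint[of j a] la j by simp
    have n1: "a!k \<noteq> a!j" using H(3)[rule_format, OF kl] Sk by simp
    have n2: "a!j \<noteq> a!(Suc j mod l)" using H(3)[rule_format, OF j] .
    have m: "a!k \<in> {0,1,2}" "a!j \<in> {0,1,2}" "a!(Suc j mod l) \<in> {0,1,2}"
      using H(1,2) kl j in012 l by auto
    have eq: "a!k = a!(Suc j mod l)"
      using sgn_diff[OF m n1 n2] s1 s2 dk dj by simp
    define c where "c = 3 - a!k - a!j"
    note F = flip[OF l V j kd eq c_def]
    define a' where "a' = a[j:=c]"
    have V': "CK_vertex l a'" using F(1) a'_def by simp
    have d': "imprint a' = xs @ Plus # Minus # ys"
      using F(2) a'_def d dk dj k_def j_def by (simp add: list_update_append)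
    have lt: "inv (imprint a') < inv (imprint a)" using d d' inv_swap by simp
    obtain c' where c': "(CK_arc l)\<^sup>*\<^sup>* a' c'" "CK_vertex l c'" "c'!0 = a'!0"
      "imprint c' = replicate (count_list (imprint a') Plus) Plus @ replicate (count_list (imprint a') Minus) Minus"
      using less.hyps[OF lt V'] by blast
    have cnt: "count_list (imprint a') s = count_list (imprint a) s" for s using d d' by simp
    have "(CK_arc l)\<^sup>*\<^sup>* a a'" using R_flip[OF l V j kd eq c_def] a'_def by simp
    then have "(CK_arc l)\<^sup>*\<^sup>* a c'" using c'(1) by (rule rtranclp_trans)
    moreover have "c'!0 = a!0" using c'(3) a'_def j_def by simp
    ultimately show ?thesis using c'(2,4) cnt by auto
  qed
qed

lemma first_reach:
  assumes l: "l \<ge> 2" and V: "CK_vertex l a" and y: "y \<in> {0,1,2}"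
  shows "\<exists>a'. (CK_arc l)\<^sup>*\<^sup>* a a' \<and> CK_vertex l a' \<and> a'!0 = y"
proof -
  have H: "length a = l" "set a \<subseteq> {0,1,2}" "\<forall>i<l. a!i \<noteq> a!(Suc i mod l)"
    using l V vert_iff by auto
  show ?thesis
  proof (cases "y \<in> set a")
    case True
    then obtain k where k: "k < l" "a!k = y" using H(1) by (auto simp: in_set_conv_nth)
    have "rotate k a ! 0 = y" using k H(1) by (simp add: nth_rotate)
    then show ?thesis using R_rot[OF l V] vert_rot[OF l V] by blast
  next
    case False
    have l1: "1 < l" using l by simp
    have "(0::nat) < l" using l by simp
    have m: "a!0 \<in> {0,1,2}" "a!1 \<in> {0,1,2}" "a!(Suc 1 mod l) \<in> {0,1,2}"
      using H(1,2) in012 l by auto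
    have "Suc 1 mod l < l" using l by simp
    then have "a!0 \<in> set a" "a!1 \<in> set a" "a!(Suc 1 mod l) \<in> set a"
      using H(1) l1 \<open>0<l\<close> nth_mem by metis+
    then have ny: "a!0 \<noteq> y" "a!1 \<noteq> y" "a!(Suc 1 mod l) \<noteq> y" using False by auto
    have n1: "a!0 \<noteq> a!1" using H(3)[rule_format, OF \<open>0<l\<close>] l by simp
    have n2: "a!1 \<noteq> a!(Suc 1 mod l)" using H(3)[rule_format, OF l1] .
    have kd: "(0::nat) = (1 + l - 1) mod l" by simp
    have eq: "a!0 = a!(Suc 1 mod l)" using m ny n1 n2 y by auto
    have cy: "y = 3 - a!0 - a!1" using m ny n1 y by auto
    define a' where "a' = a[1:=y]"
    note F = flip[OF l V l1 kd eq cy]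
    have V': "CK_vertex l a'" using F(1) a'_def by simp
    have R1: "(CK_arc l)\<^sup>*\<^sup>* a a'" using R_flip[OF l V l1 kd eq cy] a'_def by simp
    have "(CK_arc l)\<^sup>*\<^sup>* a' (rotate 1 a')" using R_rot[OF l V'] .
    moreover have "rotate 1 a' ! 0 = y" using a'_def H(1) l1 by (simp add: nth_rotate1)
    moreover note R1 vert_rot[OF l V', of 1]
    ultimately have "(CK_arc l)\<^sup>*\<^sup>* a (rotate 1 a') \<and> CK_vertex l (rotate 1 a') \<and> rotate 1 a' ! 0 = y"
      using rtranclp_trans by fast
    then show ?thesis by blast
  qed
qed

lemma imprint_det:
  assumes l: "l \<ge> 2" and V: "CK_vertex l c" and V': "CK_vertex l c'"
    and e0: "c!0 = c'!0" and ei: "imprint c = imprint c'"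
  shows "c = c'"
proof -
  have H: "length c = l" "set c \<subseteq> {0,1,2}" "\<forall>i<l. c!i \<noteq> c!(Suc i mod l)"
    using l V vert_iff by auto
  have H': "length c' = l" "set c' \<subseteq> {0,1,2}" "\<forall>i<l. c'!i \<noteq> c'!(Suc i mod l)"
    using l V' vert_iff by auto
  have "i < l \<Longrightarrow> c!i = c'!i" for i
  proof (induction i)
    case 0 then show ?case using e0 by simp
  next
    case (Suc i)
    then have il: "i < l" and IH: "c!i = c'!i" by auto
    have sm: "Suc i mod l = Suc i" using Suc.prems by simp
    have "imprint c ! i = sgn3 (c!i) (c!Suc i)" using nth_imprint[of i c] H(1) il sm by simp
    moreover have "imprint c' ! i = sgn3 (c'!i) (c'!Suc i)" using nth_imprint[of i c'] H'(1) il sm by simp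
    ultimately have s: "sgn3 (c!i) (c!Suc i) = sgn3 (c!i) (c'!Suc i)" using ei IH by simp
    have m: "c!i \<in> {0,1,2}" "c!Suc i \<in> {0,1,2}" "c'!Suc i \<in> {0,1,2}"
      using H H' in012 il Suc.prems by auto
    have "c!i \<noteq> c!Suc i" using H(3)[rule_format, OF il] sm by simp
    moreover have "c!i \<noteq> c'!Suc i" using H'(3)[rule_format, OF il] sm IH by simp
    ultimately show ?case using sgn_inj[OF m] s by blast
  qed
  then show ?thesis using H(1) H'(1) by (simp add: nth_equalityI)
qed

theorem lemma5:
  fixes l :: nat and u v :: "nat list"
  assumes "l \<ge> 2" and "CK_vertex l u" and "CK_vertex l v"
  shows "(CK_arc l)\<^sup>*\<^sup>* u v \<longleftrightarrow>
           (count_sign Plus (imprint v) = count_sign Plus (imprint u)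
            \<and> count_sign Minus (imprint v) = count_sign Minus (imprint u))"
proof
  assume "(CK_arc l)\<^sup>*\<^sup>* u v"
  then have "mset (imprint v) = mset (imprint u)" using R_mset[OF assms(1)] by blast
  then show "count_sign Plus (imprint v) = count_sign Plus (imprint u)
            \<and> count_sign Minus (imprint v) = count_sign Minus (imprint u)"
    by (simp add: count_sign_eq flip: count_mset)
next
  assume C: "count_sign Plus (imprint v) = count_sign Plus (imprint u)
            \<and> count_sign Minus (imprint v) = count_sign Minus (imprint u)"
  note l = assms(1)
  have lv: "length v = l" using vlen[OF assms(3)] .
  have "v!0 \<in> {0,1,2}" using assms(3) l in012 vert_iff lv by auto
  then obtain u1 where u1: "(CK_arc l)\<^sup>*\<^sup>* u u1" "CK_vertex l u1" "u1!0 = v!0"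
    using first_reach[OF l assms(2)] by blast
  have mu: "mset (imprint u1) = mset (imprint u)" using R_mset[OF l u1(1)] .
  obtain c where c: "(CK_arc l)\<^sup>*\<^sup>* u1 c" "CK_vertex l c" "c!0 = u1!0"
      "imprint c = replicate (count_list (imprint u1) Plus) Plus @ replicate (count_list (imprint u1) Minus) Minus"
    using sort_reach[OF l u1(2)] by blast
  obtain c' where c': "(CK_arc l)\<^sup>*\<^sup>* v c'" "CK_vertex l c'" "c'!0 = v!0"
      "imprint c' = replicate (count_list (imprint v) Plus) Plus @ replicate (count_list (imprint v) Minus) Minus"
    using sort_reach[OF l assms(3)] by blast
  have "count_list (imprint u1) s = count_list (imprint u) s" for s
    using mu by (metis count_mset)
  then have "imprint c = imprint c'" using c(4) c'(4) C by (simp add: count_sign_eq)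
  then have "c = c'" using imprint_det[OF l c(2) c'(2)] c(3) c'(3) u1(3) by simp
  then have "(CK_arc l)\<^sup>*\<^sup>* c v" using R_sym[OF l c'(1)] by simp
  then show "(CK_arc l)\<^sup>*\<^sup>* u v" using u1(1) c(1) by (meson rtranclp_trans)
qed

end
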